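(* Let $k\ge 4$ be even and let $G=(V,E)$ be a $k$-uniform cored hypergraph, with Laplacian tensor $\mathcal L$ and signless Laplacian tensor $\mathcal Q$. Then $G$ is odd-bipartite, and hence $\lambda(\mathcal L)=\lambda(\mathcal Q)$.
   Context: A $k$-uniform hypergraph $G=(V,E)$ ($k\ge 3$) is a simple undirected hypergraph with vertex set $V=[n]$ ($n\ge k$) and a nonempty edge set $E$ of $k$-element subsets of $V$. The degree $d_i$ of vertex $i$ is the number of edges containing $i$. $G$ is a cored hypergraph if every edge $e\in E$ contains a vertex of degree one. The adjacency tensor $\mathcal A$ is the order-$k$, dimension-$n$ tensor with $a_{i_1\ldots i_k}=\frac{1}{(k-1)!}$ if $\{i_1,\ldots,i_k\}\in E$ and $0$ otherwise; $\mathcal D$ is the diagonal tensor with $d_{i\ldots i}=d_i$; $\mathcal L=\mathcal D-\mathcal A$ and $\mathcal Q=\mathcal D+\mathcal A$. For a real order-$k$ dimension-$n$ tensor $\mathcal T$ and $\mathbf x\in\mathbb R^n$, $\mathcal T\mathbf x^{k-1}\in\mathbb R^n$ has $i$-th entry $\sum_{i_2,\ldots,i_k\in[n]}t_{ii_2\ldots i_k}x_{i_2}\cdots x_{i_k}$. A real $\lambda$ is an H-eigenvalue of $\mathcal T$ if there is $\mathbf x\in\mathbb R^n\setminus\{0\}$ (an H-eigenvector) with $(\mathcal T\mathbf x^{k-1})_i=\lambda x_i^{k-1}$ for all $i$; $\lambda(\mathcal T)$ denotes the largest H-eigenvalue. For even $k$, $G$ is odd-bipartite if there is a partition $V=V_1\cup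 V_2$ with $V_1,V_2\neq\emptyset$ disjoint such that every edge meets $V_1$ in an odd number of vertices. *)

theory Defs
  imports Complex_Main
begin

text \<open>Vertex set is [n] = {1..n}. A tensor of order k and dimension n is a function
  on index lists (of length k, entries in {1..n}). Vectors in R^n are functions
  nat => real, only their values on {1..n} matter.\<close>

definition k_uniform_hypergraph :: "nat \<Rightarrow> nat \<Rightarrow> nat set set \<Rightarrow> bool" where
  "k_uniform_hypergraph n k E \<longleftrightarrow> 3 \<le> k \<and> k \<le> n \<and> E \<noteq> {} \<and>
     (\<forall>e\<in>E. e \<subseteq> {1..n} \<and> card e = k)"

definition hdegree :: "nat set set \<Rightarrow> nat \<Rightarrow> nat" where
  "hdegree E i = card {e\<in>E. i \<in> e}"

definition cored :: "nat set set \<Rightarrow> bool" where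
  "cored E \<longleftrightarrow> (\<forall>e\<in>E. \<exists>v\<in>e. hdegree E v = 1)"

definition odd_bipartite :: "nat \<Rightarrow> nat set set \<Rightarrow> bool" where
  "odd_bipartite n E \<longleftrightarrow> (\<exists>V1 V2. V1 \<union> V2 = {1..n} \<and> V1 \<inter> V2 = {} \<and>
      V1 \<noteq> {} \<and> V2 \<noteq> {} \<and> (\<forall>e\<in>E. odd (card (e \<inter> V1))))"

definition adj_tensor :: "nat \<Rightarrow> nat set set \<Rightarrow> nat list \<Rightarrow> real" where
  "adj_tensor k E is = (if set is \<in> E then 1 / fact (k - 1) else 0)"

definition deg_tensor :: "nat set set \<Rightarrow> nat list \<Rightarrow> real" where
  "deg_tensor E is = (if is \<noteq> [] \<and> (\<forall>j\<in>set is. j = hd is) then real (hdegree E (hd is)) else 0)"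

definition lap_tensor :: "nat \<Rightarrow> nat set set \<Rightarrow> nat list \<Rightarrow> real" where
  "lap_tensor k E is = deg_tensor E is - adj_tensor k E is"

definition slap_tensor :: "nat \<Rightarrow> nat set set \<Rightarrow> nat list \<Rightarrow> real" where
  "slap_tensor k E is = deg_tensor E is + adj_tensor k E is"

text \<open>(T x^{k-1})_i = sum over i_2..i_k in [n] of t_{i i_2 ... i_k} x_{i_2}...x_{i_k}.\<close>
definition tensor_apply :: "nat \<Rightarrow> nat \<Rightarrow> (nat list \<Rightarrow> real) \<Rightarrow> (nat \<Rightarrow> real) \<Rightarrow> nat \<Rightarrow> real" where
  "tensor_apply n k T x i =
     (\<Sum>js\<in>{js. length js = k - 1 \<and> set js \<subseteq> {1..n}}. T (i # js) * prod_list (map x js))"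

definition is_H_eigenvalue :: "nat \<Rightarrow> nat \<Rightarrow> (nat list \<Rightarrow> real) \<Rightarrow> real \<Rightarrow> bool" where
  "is_H_eigenvalue n k T mu \<longleftrightarrow> (\<exists>x :: nat \<Rightarrow> real. (\<exists>i\<in>{1..n}. x i \<noteq> 0) \<and>
      (\<forall>i\<in>{1..n}. tensor_apply n k T x i = mu * x i ^ (k - 1)))"

text \<open>Largest H-eigenvalue (the set of H-eigenvalues is finite and, for the tensors
  considered, nonempty).\<close>
definition largest_H_eigenvalue :: "nat \<Rightarrow> nat \<Rightarrow> (nat list \<Rightarrow> real) \<Rightarrow> real" where
  "largest_H_eigenvalue n k T = Sup {mu. is_H_eigenvalue n k T mu}"

end

theory Submission
  imports Defs
begin

lemma prod_list_map_mult: "prod_list (map (\<lambda>j. f j * g j) js) = prod_list (map f js) * prod_list (map (g::nat\<Rightarrow>real) js)"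
  by (induction js) (auto simp: algebra_simps)

lemma sgn_pow:
  fixes V1 :: "nat set"
  assumes "odd m"
  shows "(if i \<in> V1 then -1 else 1::real) ^ m = (if i \<in> V1 then -1 else 1)"
  using assms by auto

lemma prod_sign_set:
  fixes A V1 :: "nat set" assumes "finite A"
  shows "(\<Prod>j\<in>A. (if j \<in> V1 then -1 else 1::real)) = (-1) ^ card (A \<inter> V1)"
proof -
  have "(\<Prod>j\<in>A. (if j \<in> V1 then -1 else 1::real)) = (\<Prod>j\<in>A \<inter> {j. j\<in>V1}. -1) * (\<Prod>j\<in>A \<inter> - {j. j\<in>V1}. 1)"
    by (rule prod.If_cases[OF assms])
  also have "\<dots> = (-1) ^ card (A \<inter> V1)" by (simp add: Collect_mem_eq)
  finally show ?thesis .
qed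

lemma deg1_lem:
  assumes "hdegree E v = 1" "e \<in> E" "e' \<in> E" "v \<in> e" "v \<in> e'" shows "e = e'"
proof -
  have "card {e\<in>E. v \<in> e} = 1" using assms(1) unfolding hdegree_def .
  then obtain a where A: "{e\<in>E. v \<in> e} = {a}" by (rule card_1_singletonE)
  have "e \<in> {a}" using assms A by blast
  moreover have "e' \<in> {a}" using assms A by blast
  ultimately show "e = e'" by simp
qed

lemma odd_bip:
  assumes H: "k_uniform_hypergraph n k E" and k4: "4 \<le> k" and C: "cored E"
  shows "odd_bipartite n E"
proof -
  note deg1 = deg1_lem
  define c where "c e = (SOME v. v \<in> e \<and> hdegree E v = 1)" for e
  have c: "\<And>e. e \<in> E \<Longrightarrow> c e \<in> e \<and> hdegree E (c e) = 1"
    unfolding c_def by (rule someI_ex) (use C cored_def in blast)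
  define V1 where "V1 = c ` E"
  have int: "\<And>e. e \<in> E \<Longrightarrow> e \<inter> V1 = {c e}"
  proof
    fix e assume e: "e \<in> E"
    show "e \<inter> V1 \<subseteq> {c e}"
    proof
      fix v assume "v \<in> e \<inter> V1"
      then obtain e' where e': "e' \<in> E" "v = c e'" "v \<in> e" unfolding V1_def by auto
      have "hdegree E v = 1" using c[OF e'(1)] e'(2) by simp
      then have "e = e'" using deg1_lem[of E v e e'] c[OF e'(1)] e e' by blast
      thus "v \<in> {c e}" using e' by simp
    qed
    show "{c e} \<subseteq> e \<inter> V1" using c[OF e] e unfolding V1_def by auto
  qed
  have sub: "\<And>e. e \<in> E \<Longrightarrow> e \<subseteq> {1..n} \<and> card e = k" using H unfolding k_uniform_hypergraph_def by auto
  obtain e0 where e0: "e0 \<in> E" using H unfolding k_uniform_hypergraph_def by auto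
  have "card e0 = k" using sub[OF e0] by simp
  have "\<not> e0 \<subseteq> {c e0}"
  proof
    assume "e0 \<subseteq> {c e0}"
    then have "card e0 \<le> card {c e0}" by (intro card_mono) auto
    then show False using \<open>card e0 = k\<close> k4 by simp
  qed
  then obtain w where w: "w \<in> e0" "w \<notin> {c e0}" by auto
  then have wV1: "w \<notin> V1" using int[OF e0] by auto
  show ?thesis unfolding odd_bipartite_def
  proof (intro exI conjI)
    have "V1 \<subseteq> {1..n}" unfolding V1_def using sub c by blast
    then show "V1 \<union> ({1..n} - V1) = {1..n}" by blast
    show "V1 \<inter> ({1..n} - V1) = {}" by auto
    show "V1 \<noteq> {}" using e0 unfolding V1_def by auto
    show "{1..n} - V1 \<noteq> {}" using w wV1 sub[OF e0] by auto
    show "\<forall>e\<in>E. odd (card (e \<inter> V1))" using int by simp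
  qed
qed

definition sgnv :: "nat set \<Rightarrow> nat \<Rightarrow> real" where
  "sgnv V1 j = (if j \<in> V1 then -1 else 1)"

lemma term_lemma:
  assumes H: "k_uniform_hypergraph n k E" and ev: "even k"
    and V1: "\<forall>e\<in>E. odd (card (e \<inter> V1))"
    and js: "length js = k - 1"
  shows "deg_tensor E (i#js) * prod_list (map (sgnv V1) js) = sgnv V1 i * deg_tensor E (i#js)"
    and "adj_tensor k E (i#js) * prod_list (map (sgnv V1) js) = - (sgnv V1 i * adj_tensor k E (i#js))"
proof -
  have k3: "3 \<le> k" using H unfolding k_uniform_hypergraph_def by auto
  show "deg_tensor E (i#js) * prod_list (map (sgnv V1) js) = sgnv V1 i * deg_tensor E (i#js)"
  proof (cases "\<forall>j\<in>set js. j = i")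
    case True
    then have "js = replicate (k-1) i" using replicate_length_same[of js i] js by simp
    then have "prod_list (map (sgnv V1) js) = sgnv V1 i ^ (k-1)" by (simp add: prod_list_replicate)
    also have "\<dots> = sgnv V1 i" unfolding sgnv_def using ev k3 by (auto intro!: sgn_pow)
    finally show ?thesis by simp
  next
    case False then have "deg_tensor E (i#js) = 0" unfolding deg_tensor_def by auto
    then show ?thesis by simp
  qed
  show "adj_tensor k E (i#js) * prod_list (map (sgnv V1) js) = - (sgnv V1 i * adj_tensor k E (i#js))"
  proof (cases "set (i#js) \<in> E")
    case True
    then have cd: "card (set (i#js)) = k" using H unfolding k_uniform_hypergraph_def by auto
    have dist: "distinct (i#js)" using cd js k3
    proof -
      have "length (i#js) = k" using js k3 by simp
      then show ?thesis using cd card_distinct[of "i#js"] by simp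
    qed
    then have ni: "i \<notin> set js" and dj: "distinct js" by auto
    have "prod_list (map (sgnv V1) js) = (\<Prod>j\<in>set js. sgnv V1 j)" using dj by (simp add: prod.distinct_set_conv_list)
    also have "\<dots> = (-1) ^ card (set js \<inter> V1)" unfolding sgnv_def by (rule prod_sign_set) simp
    finally have P: "prod_list (map (sgnv V1) js) = (-1) ^ card (set js \<inter> V1)" .
    have od: "odd (card (insert i (set js) \<inter> V1))" using V1 True by auto
    have "prod_list (map (sgnv V1) js) = - sgnv V1 i"
    proof (cases "i \<in> V1")
      case True
      then have "insert i (set js) \<inter> V1 = insert i (set js \<inter> V1)" by auto
      then have "card (insert i (set js) \<inter> V1) = Suc (card (set js \<inter> V1))" using ni by simp
      then show ?thesis using P od True unfolding sgnv_def by simp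
    next
      case False
      then have "insert i (set js) \<inter> V1 = set js \<inter> V1" by auto
      then show ?thesis using P od False unfolding sgnv_def by simp
    qed
    then show ?thesis by simp
  next
    case False then show ?thesis by (simp add: adj_tensor_def)
  qed
qed

lemma eig_transfer:
  assumes H: "k_uniform_hypergraph n k E" and ev: "even k"
    and V1: "\<forall>e\<in>E. odd (card (e \<inter> V1))"
    and T1: "\<And>is. T1 is = deg_tensor E is + sg * adj_tensor k E is"
    and T2: "\<And>is. T2 is = deg_tensor E is - sg * adj_tensor k E is"
    and "is_H_eigenvalue n k T1 mu"
  shows "is_H_eigenvalue n k T2 mu"
proof -
  define s where "s = sgnv V1"
  have k3: "3 \<le> k" using H unfolding k_uniform_hypergraph_def by auto
  obtain x where x0: "\<exists>i\<in>{1..n}. x i \<noteq> 0" and xe: "\<forall>i\<in>{1..n}. tensor_apply n k T1 x i = mu * x i ^ (k - 1)"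
    using assms(6) unfolding is_H_eigenvalue_def by blast
  define y where "y j = s j * x j" for j
  have sp: "s i ^ (k-1) = s i" for i unfolding s_def sgnv_def using ev k3 by (auto intro!: sgn_pow)
  have s2: "s i * s i = 1" for i unfolding s_def sgnv_def by auto
  show ?thesis unfolding is_H_eigenvalue_def
  proof (intro exI conjI ballI)
    show "\<exists>i\<in>{1..n}. y i \<noteq> 0" using x0 unfolding y_def s_def sgnv_def by auto
    fix i assume i: "i \<in> {1..n}"
    have "tensor_apply n k T2 y i = (\<Sum>js\<in>{js. length js = k - 1 \<and> set js \<subseteq> {1..n}}. s i * (T1 (i # js) * prod_list (map x js)))"
      unfolding tensor_apply_def
    proof (rule sum.cong[OF refl])
      fix js assume "js \<in> {js. length js = k - 1 \<and> set js \<subseteq> {1..n}}"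
      then have l: "length js = k - 1" by simp
      note tl = term_lemma[OF H ev V1 l, of i, folded s_def]
      have "T2 (i#js) * prod_list (map y js) = (T2 (i#js) * prod_list (map s js)) * prod_list (map x js)"
        unfolding y_def prod_list_map_mult by simp
      also have "T2 (i#js) * prod_list (map s js) = s i * T1 (i#js)"
      proof -
        have "T2 (i#js) * prod_list (map s js) = deg_tensor E (i#js) * prod_list (map s js) - sg * (adj_tensor k E (i#js) * prod_list (map s js))"
          unfolding T2 by (simp add: algebra_simps)
        also have "\<dots> = s i * deg_tensor E (i#js) + sg * (s i * adj_tensor k E (i#js))"
          unfolding tl by simp
        also have "\<dots> = s i * T1 (i#js)" unfolding T1 by (simp add: algebra_simps)
        finally show ?thesis .
      qed
      finally show "T2 (i#js) * prod_list (map y js) = s i * (T1 (i # js) * prod_list (map x js))" by simp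
    qed
    also have "\<dots> = s i * tensor_apply n k T1 x i" unfolding tensor_apply_def by (simp add: sum_distrib_left)
    also have "\<dots> = mu * (s i ^ (k-1) * x i ^ (k-1))" using xe i sp by simp
    also have "\<dots> = mu * y i ^ (k-1)" unfolding y_def by (simp add: power_mult_distrib)
    finally show "tensor_apply n k T2 y i = mu * y i ^ (k - 1)" .
  qed
qed

theorem proposition3p2:
  fixes n k :: nat and E :: "nat set set"
  assumes "k_uniform_hypergraph n k E"
    and "4 \<le> k" and "even k"
    and "cored E"
  shows "odd_bipartite n E \<and>
         largest_H_eigenvalue n k (lap_tensor k E) = largest_H_eigenvalue n k (slap_tensor k E)"
proof -
  have ob: "odd_bipartite n E" using odd_bip assms by blast
  then obtain V1 where V1: "\<forall>e\<in>E. odd (card (e \<inter> V1))" unfolding odd_bipartite_def by blast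
  have "{mu. is_H_eigenvalue n k (lap_tensor k E) mu} = {mu. is_H_eigenvalue n k (slap_tensor k E) mu}"
  proof (intro set_eqI iffI; simp)
    fix mu
    show "is_H_eigenvalue n k (lap_tensor k E) mu \<Longrightarrow> is_H_eigenvalue n k (slap_tensor k E) mu"
      by (rule eig_transfer[OF assms(1) assms(3) V1, of _ "-1"]) (auto simp: lap_tensor_def slap_tensor_def)
    show "is_H_eigenvalue n k (slap_tensor k E) mu \<Longrightarrow> is_H_eigenvalue n k (lap_tensor k E) mu"
      by (rule eig_transfer[OF assms(1) assms(3) V1, of _ "1"]) (auto simp: lap_tensor_def slap_tensor_def)
  qed
  then show ?thesis using ob unfolding largest_H_eigenvalue_def by simp
qed

end
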